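(* Let $\alpha\neq0$, $s,t\in\mathbb{C}$, $w=\tfrac12(s+t)$ with $w\notin\mathbb{Z}$, $n$ a positive integer, $c\in\mathbb{Z}$, $k\in\{-n,-n+2,\dots,n\}$, $u\in\mathbb{C}$, and $n_\pm(k)=\tfrac12(n\pm k)$. Then the following polynomial identities in $z$ hold: $$-\alpha^{-1}\Big\{[\alpha(-u+c+1+s)-z]\Delta_--\alpha u\Delta_+\Big\}\psi^{(n)}(z|0)^{c+k+1}_{c+1}=\frac{n_-(k)(c+1-n_-(k)+w-u)}{c+k+1+w}\,\psi^{(n)}(z|0)^{c+k+2}_{c}+\frac{(u+n_+(k))(c+1+n_+(k)+w)}{c+k+1+w}\,\psi^{(n)}(z|0)^{c+k}_{c},$$ $$-\alpha^{-1}\Big\{[\alpha(-u-c+1-t)-z]\Delta_--\alpha u\Delta_+\Big\}\psi^{(n)}(z|0)^{c+k-1}_{c-1}=\frac{n_+(k)(c-1+n_+(k)+w+u)}{c+k-1+w}\,\psi^{(n)}(z|0)^{c+k-2}_{c}+\frac{(u+n_-(k))(c-1-n_-(k)+w)}{c+k-1+w}\,\psi^{(n)}(z|0)^{c+k}_{c}.$$ Thus these coefficients are the weights $W^{(n,1)}\left(\begin{smallmatrix} c+k+1& c+1\\ c+k+1\pm1& c\end{smallmatrix}\middle|u\right)$ and $W^{(n,1)}\left(\begin{smallmatrix} c+k-1& c-1\\ c+k-1\mp1& c\end{smallmatrix}\middle|u\right)$ respectively.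
   Context: $[\Delta_\pm f](z)=\tfrac12(f(z+\alpha)\pm f(z-\alpha))$; $z$ acts by multiplication. For a positive integer $n$, integers $a,b$ and $u\in\mathbb{C}$, with $n_+=\tfrac12(n+b-a)$, $n_-=\tfrac12(n-b+a)$: if $n_\pm$ are nonnegative integers, $\psi^{(n)}(z|u)^a_b=(-1)^n\prod_{p=1}^{n_+}[z-\alpha(u+n-a-2p+1-t)]\prod_{q=1}^{n_-}[z-\alpha(u+n+a-2q+1+s)]$; otherwise $\psi^{(n)}(z|u)^a_b=0$. *)

theory Defs
  imports Complex_Main
begin

definition Dplus :: "complex \<Rightarrow> (complex \<Rightarrow> complex) \<Rightarrow> complex \<Rightarrow> complex" where
  "Dplus \<alpha> f z = (f (z + \<alpha>) + f (z - \<alpha>)) / 2"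

definition Dminus :: "complex \<Rightarrow> (complex \<Rightarrow> complex) \<Rightarrow> complex \<Rightarrow> complex" where
  "Dminus \<alpha> f z = (f (z + \<alpha>) - f (z - \<alpha>)) / 2"

text \<open>psi alpha s t n u a b z = psi^(n)(z|u)^a_b; n_+ = (n+b-a)/2, n_- = (n-b+a)/2 must be
  nonnegative integers, i.e. n+b-a even and |b-a| <= n.\<close>
definition psi :: "complex \<Rightarrow> complex \<Rightarrow> complex \<Rightarrow> nat \<Rightarrow> complex \<Rightarrow> int \<Rightarrow> int \<Rightarrow> complex \<Rightarrow> complex" where
  "psi \<alpha> s t n u a b z =
    (if even (int n + b - a) \<and> int n + b - a \<ge> 0 \<and> int n - b + a \<ge> 0 then
       (-1) ^ n *
       (\<Prod>p\<in>{1..nat ((int n + b - a) div 2)}.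
          z - \<alpha> * (u + of_nat n - of_int a - 2 * of_nat p + 1 - t)) *
       (\<Prod>q\<in>{1..nat ((int n - b + a) div 2)}.
          z - \<alpha> * (u + of_nat n + of_int a - 2 * of_nat q + 1 + s))
     else 0)"

end

theory Submission
  imports Defs
begin

definition F :: "complex \<Rightarrow> complex \<Rightarrow> nat \<Rightarrow> complex \<Rightarrow> complex" where
 "F \<alpha> R m z = (\<Prod>p\<in>{1..m}. z - \<alpha> * (R - 2 * of_nat p))"

lemma F0[simp]: "F \<alpha> R 0 z = 1" by (simp add: F_def)

lemma F_Suc_right: "F \<alpha> R (Suc m) z = F \<alpha> R m z * (z - \<alpha> * (R - 2 * of_nat m - 2))"
  unfolding F_def by (simp add: prod.cl_ivl_Suc algebra_simps)

lemma F_Suc_left: "F \<alpha> (R + 1) (Suc m) z = (z - \<alpha> * (R - 1)) * F \<alpha> (R - 1) m z"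
proof -
  have "F \<alpha> (R + 1) (Suc m) z = (z - \<alpha> * (R + 1 - 2)) * (\<Prod>p\<in>{Suc 1..Suc m}. z - \<alpha> * (R + 1 - 2 * of_nat p))"
    unfolding F_def by (subst prod.atLeast_Suc_atMost) auto
  also have "(\<Prod>p\<in>{Suc 1..Suc m}. z - \<alpha> * (R + 1 - 2 * of_nat p)) = F \<alpha> (R - 1) m z"
    unfolding F_def prod.shift_bounds_cl_Suc_ivl by (intro prod.cong) (auto simp: algebra_simps)
  finally show ?thesis by (simp add: algebra_simps)
qed

lemma F_plus: "F \<alpha> R m (z + \<alpha>) = F \<alpha> (R - 1) m z"
  unfolding F_def by (intro prod.cong) (auto simp: algebra_simps)
lemma F_minus: "F \<alpha> R m (z - \<alpha>) = F \<alpha> (R + 1) m z"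
  unfolding F_def by (intro prod.cong) (auto simp: algebra_simps)

lemma psi_F:
  assumes "int n + b - a = 2 * int mp" "int n - b + a = 2 * int mq"
    and "R = of_nat n - of_int a + 1 - t" "S = of_nat n + of_int a + 1 + s"
  shows "psi \<alpha> s t n 0 a b z = (-1)^n * F \<alpha> R mp z * F \<alpha> S mq z"
proof -
  have c: "even (int n + b - a) \<and> int n + b - a \<ge> 0 \<and> int n - b + a \<ge> 0" using assms by auto
  have 1: "nat ((int n + b - a) div 2) = mp" "nat ((int n - b + a) div 2) = mq" using assms(1,2) by auto
  show ?thesis unfolding psi_def F_def using c 1
    by (simp add: assms(3,4)) (intro arg_cong2[where f="(*)"] prod.cong; simp add: algebra_simps)
qed
lemma divtrick: "(D::complex) \<noteq> 0 \<Longrightarrow> (A = B / D * P + C / D * Q) = (A * D = B * P + C * Q)"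
  by (auto simp: field_simps)

lemma divtrick2: "(D::complex) \<noteq> 0 \<Longrightarrow> (L = A / D + B / D) = (L * D = A + B)"
  by (auto simp: field_simps)

lemma divtrick3: "(\<alpha>::complex) \<noteq> 0 \<Longrightarrow> (- ((K * M / 2 - V * N / 2) / \<alpha>) * D = RHS) = (- (K * M - V * N) * D = 2 * \<alpha> * RHS)"
  by (auto simp: field_simps)

lemma id1:
  fixes \<alpha> s t u z :: complex and n m l :: nat and c k :: int
  assumes a: "\<alpha> \<noteq> 0" and d: "of_int c + of_int k + 1 + (s + t) / 2 \<noteq> (0::complex)"
    and hm: "int n - k = 2 * int m" and hl: "int n + k = 2 * int l"
  shows "- (1 / \<alpha>) *
            ((\<alpha> * (- u + of_int c + 1 + s) - z) * Dminus \<alpha> (psi \<alpha> s t n 0 (c + k + 1) (c + 1)) z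
             - \<alpha> * u * Dplus \<alpha> (psi \<alpha> s t n 0 (c + k + 1) (c + 1)) z)
         = ((of_int n - of_int k) / 2) * (of_int c + 1 - (of_int n - of_int k) / 2 + (s + t) / 2 - u)
             / (of_int c + of_int k + 1 + (s + t) / 2) * psi \<alpha> s t n 0 (c + k + 2) c z
           + (u + (of_int n + of_int k) / 2) * (of_int c + 1 + (of_int n + of_int k) / 2 + (s + t) / 2)
             / (of_int c + of_int k + 1 + (s + t) / 2) * psi \<alpha> s t n 0 (c + k) c z"
proof -
  define R where "R = (of_nat n - of_int (c + k + 1) + 1 - t :: complex)"
  define S where "S = (of_nat n + of_int (c + k + 1) + 1 + s :: complex)"
  have cm: "(of_int n - of_int k) / 2 = (of_nat m :: complex)"
  proof -
    have "(of_int (int n - k) :: complex) = of_int (2 * int m)" using hm by simp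
    thus ?thesis by simp
  qed
  have cl: "(of_int n + of_int k) / 2 = (of_nat l :: complex)"
  proof -
    have "(of_int (int n + k) :: complex) = of_int (2 * int l)" using hl by simp
    thus ?thesis by simp
  qed
  have ki: "k = int l - int m" "int n = int m + int l" using hm hl by linarith+
  have nn: "(of_nat n :: complex) = of_nat m + of_nat l"
  proof -
    have "(of_int (int n) :: complex) = of_int (int m + int l)" using ki by simp
    thus ?thesis by simp
  qed
  have kk: "(of_int k :: complex) = of_nat l - of_nat m" using ki by simp
  have p0: "\<And>z. psi \<alpha> s t n 0 (c+k+1) (c+1) z = (-1)^n * F \<alpha> R m z * F \<alpha> S l z"
    by (rule psi_F) (use hm hl in \<open>auto simp: R_def S_def\<close>)
  have p2: "psi \<alpha> s t n 0 (c+k) c z = (-1)^n * F \<alpha> (R+1) m z * F \<alpha> (S-1) l z"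
    by (rule psi_F) (use hm hl in \<open>auto simp: R_def S_def\<close>)
  have D: "Dminus \<alpha> (psi \<alpha> s t n 0 (c + k + 1) (c + 1)) z
      = ((-1)^n * F \<alpha> (R-1) m z * F \<alpha> (S-1) l z - (-1)^n * F \<alpha> (R+1) m z * F \<alpha> (S+1) l z) / 2"
          "Dplus \<alpha> (psi \<alpha> s t n 0 (c + k + 1) (c + 1)) z
      = ((-1)^n * F \<alpha> (R-1) m z * F \<alpha> (S-1) l z + (-1)^n * F \<alpha> (R+1) m z * F \<alpha> (S+1) l z) / 2"
    by (simp_all add: Dminus_def Dplus_def p0 F_plus F_minus)
  have d': "of_int c + of_nat l - of_nat m + 1 + (s + t) / 2 \<noteq> (0::complex)" using d kk by (simp add: algebra_simps)
  note E = D p2 cm cl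
  note DT = divtrick[OF d]
  have Re: "R = of_nat m + of_nat l - (of_int c + (of_nat l - of_nat m) + 1) + 1 - t" unfolding R_def nn kk[symmetric] by simp
  have Se: "S = of_nat m + of_nat l + (of_int c + (of_nat l - of_nat m) + 1) + 1 + s" unfolding S_def nn kk[symmetric] by simp
  define w where "w = (s + t) / 2"
  have sw: "s = 2*w - t" by (simp add: w_def field_simps)
  have d'': "of_int c + of_nat l - of_nat m + 1 + w \<noteq> 0" using d' by (simp add: w_def)
  show ?thesis
  proof (cases m)
    case 0
    note m0 = 0
    show ?thesis
    proof (cases l)
      case 0
      show ?thesis using a d'' m0 0 unfolding E unfolding m0 0 unfolding F0 
        unfolding Re Se nn kk sw m0 0
        by (simp add: field_simps; simp add: algebra_simps)
    next
      case (Suc l')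
      have e1: "F \<alpha> (S-1) (Suc l') z = F \<alpha> (S-1) l' z * (z - \<alpha>*(S-1-2*of_nat l' - 2))" by (rule F_Suc_right)
      have e2: "F \<alpha> (S+1) (Suc l') z = (z - \<alpha>*(S-1)) * F \<alpha> (S-1) l' z" by (rule F_Suc_left)
      obtain Y where Y: "F \<alpha> (S-1) l' z = Y" by simp
      show ?thesis using a d'' m0 Suc unfolding E unfolding m0 Suc unfolding F0 e1 e2 Y 
        unfolding Re Se nn kk sw m0 Suc
        by (simp add: field_simps; simp add: algebra_simps)
    qed
  next
    case (Suc m')
    have p1: "psi \<alpha> s t n 0 (c+k+2) c z = (-1)^n * F \<alpha> (R-1) m' z * F \<alpha> (S+1) (Suc l) z"
      by (rule psi_F) (use hm hl Suc in \<open>auto simp: R_def S_def\<close>)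
    have f1: "F \<alpha> (R-1) (Suc m') z = F \<alpha> (R-1) m' z * (z - \<alpha>*(R-1-2*of_nat m' - 2))" by (rule F_Suc_right)
    have f2: "F \<alpha> (R+1) (Suc m') z = (z - \<alpha>*(R-1)) * F \<alpha> (R-1) m' z" by (rule F_Suc_left)
    have g: "F \<alpha> (S+1) (Suc l) z = (z - \<alpha>*(S-1)) * F \<alpha> (S-1) l z" by (rule F_Suc_left)
    note mS = Suc
    obtain X where X: "F \<alpha> (R-1) m' z = X" by simp
    show ?thesis
    proof (cases l)
      case 0
      have d3: "complex_of_int c - complex_of_nat m' + w \<noteq> 0" using d'' mS 0 by (simp add: algebra_simps)
      show ?thesis using a d'' mS 0 unfolding E p1 g unfolding mS 0 unfolding F0 f1 f2 X 
        unfolding Re Se nn kk sw mS 0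
        apply simp
        apply (subst divtrick2)
        using d3 apply simp
        apply (subst divtrick3[OF a])
        apply algebra done
    next
      case (Suc l')
      have e1: "F \<alpha> (S-1) (Suc l') z = F \<alpha> (S-1) l' z * (z - \<alpha>*(S-1-2*of_nat l' - 2))" by (rule F_Suc_right)
      have e2: "F \<alpha> (S+1) (Suc l') z = (z - \<alpha>*(S-1)) * F \<alpha> (S-1) l' z" by (rule F_Suc_left)
      obtain Y where Y: "F \<alpha> (S-1) l' z = Y" by simp
      have d4: "complex_of_int c + (complex_of_nat l' - complex_of_nat m') + 1 + w \<noteq> 0" using d'' mS Suc by (simp add: algebra_simps)
      show ?thesis using a d'' mS Suc unfolding E p1 g unfolding mS Suc unfolding F0 f1 f2 e1 e2 X Y 
        unfolding Re Se nn kk sw mS Suc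
        apply simp
        apply (subst divtrick2)
        using d4 apply simp
        apply (subst divtrick3[OF a])
        apply algebra done
    qed
  qed
qed
lemma id2:
  fixes \<alpha> s t u z :: complex and n m l :: nat and c k :: int
  assumes a: "\<alpha> \<noteq> 0" and d: "of_int c + of_int k - 1 + (s + t) / 2 \<noteq> (0::complex)"
    and hm: "int n - k = 2 * int m" and hl: "int n + k = 2 * int l"
  shows "- (1 / \<alpha>) *
            ((\<alpha> * (- u - of_int c + 1 - t) - z) * Dminus \<alpha> (psi \<alpha> s t n 0 (c + k - 1) (c - 1)) z
             - \<alpha> * u * Dplus \<alpha> (psi \<alpha> s t n 0 (c + k - 1) (c - 1)) z)
         = ((of_int n + of_int k) / 2) * (of_int c - 1 + (of_int n + of_int k) / 2 + (s + t) / 2 + u)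
             / (of_int c + of_int k - 1 + (s + t) / 2) * psi \<alpha> s t n 0 (c + k - 2) c z
           + (u + (of_int n - of_int k) / 2) * (of_int c - 1 - (of_int n - of_int k) / 2 + (s + t) / 2)
             / (of_int c + of_int k - 1 + (s + t) / 2) * psi \<alpha> s t n 0 (c + k) c z"
proof -
  define R where "R = (of_nat n - of_int (c + k - 1) + 1 - t :: complex)"
  define S where "S = (of_nat n + of_int (c + k - 1) + 1 + s :: complex)"
  have cm: "(of_int n - of_int k) / 2 = (of_nat m :: complex)"
  proof -
    have "(of_int (int n - k) :: complex) = of_int (2 * int m)" using hm by simp
    thus ?thesis by simp
  qed
  have cl: "(of_int n + of_int k) / 2 = (of_nat l :: complex)"
  proof -
    have "(of_int (int n + k) :: complex) = of_int (2 * int l)" using hl by simp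
    thus ?thesis by simp
  qed
  have ki: "k = int l - int m" "int n = int m + int l" using hm hl by linarith+
  have nn: "(of_nat n :: complex) = of_nat m + of_nat l"
  proof -
    have "(of_int (int n) :: complex) = of_int (int m + int l)" using ki by simp
    thus ?thesis by simp
  qed
  have kk: "(of_int k :: complex) = of_nat l - of_nat m" using ki by simp
  have p0: "\<And>z. psi \<alpha> s t n 0 (c+k-1) (c-1) z = (-1)^n * F \<alpha> R m z * F \<alpha> S l z"
    by (rule psi_F) (use hm hl in \<open>auto simp: R_def S_def\<close>)
  have p2: "psi \<alpha> s t n 0 (c+k) c z = (-1)^n * F \<alpha> (R-1) m z * F \<alpha> (S+1) l z"
    by (rule psi_F) (use hm hl in \<open>auto simp: R_def S_def\<close>)
  have D: "Dminus \<alpha> (psi \<alpha> s t n 0 (c + k - 1) (c - 1)) z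
      = ((-1)^n * F \<alpha> (R-1) m z * F \<alpha> (S-1) l z - (-1)^n * F \<alpha> (R+1) m z * F \<alpha> (S+1) l z) / 2"
          "Dplus \<alpha> (psi \<alpha> s t n 0 (c + k - 1) (c - 1)) z
      = ((-1)^n * F \<alpha> (R-1) m z * F \<alpha> (S-1) l z + (-1)^n * F \<alpha> (R+1) m z * F \<alpha> (S+1) l z) / 2"
    by (simp_all add: Dminus_def Dplus_def p0 F_plus F_minus)
  have d': "of_int c + of_nat l - of_nat m - 1 + (s + t) / 2 \<noteq> (0::complex)" using d kk by (simp add: algebra_simps)
  note E = D p2 cm cl
  have Re: "R = of_nat m + of_nat l - (of_int c + (of_nat l - of_nat m) - 1) + 1 - t" unfolding R_def nn kk[symmetric] by simp
  have Se: "S = of_nat m + of_nat l + (of_int c + (of_nat l - of_nat m) - 1) + 1 + s" unfolding S_def nn kk[symmetric] by simp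
  define w where "w = (s + t) / 2"
  have sw: "s = 2*w - t" by (simp add: w_def field_simps)
  have d'': "of_int c + of_nat l - of_nat m - 1 + w \<noteq> 0" using d' by (simp add: w_def)
  show ?thesis
  proof (cases l)
    case 0
    note l0 = 0
    show ?thesis
    proof (cases m)
      case 0
      show ?thesis using a d'' l0 0 unfolding E unfolding l0 0 unfolding F0
        unfolding Re Se nn kk sw l0 0
        by (simp add: field_simps; simp add: algebra_simps)
    next
      case (Suc m')
      have f1: "F \<alpha> (R-1) (Suc m') z = F \<alpha> (R-1) m' z * (z - \<alpha>*(R-1-2*of_nat m' - 2))" by (rule F_Suc_right)
      have f2: "F \<alpha> (R+1) (Suc m') z = (z - \<alpha>*(R-1)) * F \<alpha> (R-1) m' z" by (rule F_Suc_left)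
      obtain X where X: "F \<alpha> (R-1) m' z = X" by simp
      show ?thesis using a d'' l0 Suc unfolding E unfolding l0 Suc unfolding F0 f1 f2 X
        unfolding Re Se nn kk sw l0 Suc
        by (simp add: field_simps; simp add: algebra_simps)
    qed
  next
    case (Suc l')
    have p1: "psi \<alpha> s t n 0 (c+k-2) c z = (-1)^n * F \<alpha> (R+1) (Suc m) z * F \<alpha> (S-1) l' z"
      by (rule psi_F) (use hm hl Suc in \<open>auto simp: R_def S_def\<close>)
    have e1: "F \<alpha> (S-1) (Suc l') z = F \<alpha> (S-1) l' z * (z - \<alpha>*(S-1-2*of_nat l' - 2))" by (rule F_Suc_right)
    have e2: "F \<alpha> (S+1) (Suc l') z = (z - \<alpha>*(S-1)) * F \<alpha> (S-1) l' z" by (rule F_Suc_left)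
    have g: "F \<alpha> (R+1) (Suc m) z = (z - \<alpha>*(R-1)) * F \<alpha> (R-1) m z" by (rule F_Suc_left)
    note lS = Suc
    obtain Y where Y: "F \<alpha> (S-1) l' z = Y" by simp
    show ?thesis
    proof (cases m)
      case 0
      have d3: "complex_of_int c + complex_of_nat l' + w \<noteq> 0" using d'' lS 0 by (simp add: algebra_simps)
      show ?thesis using a d'' lS 0 unfolding E p1 g unfolding lS 0 unfolding F0 e1 e2 Y
        unfolding Re Se nn kk sw lS 0
        apply simp
        apply (subst divtrick2)
        using d3 apply simp
        apply (subst divtrick3[OF a])
        apply algebra done
    next
      case (Suc m')
      have f1: "F \<alpha> (R-1) (Suc m') z = F \<alpha> (R-1) m' z * (z - \<alpha>*(R-1-2*of_nat m' - 2))" by (rule F_Suc_right)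
      have f2: "F \<alpha> (R+1) (Suc m') z = (z - \<alpha>*(R-1)) * F \<alpha> (R-1) m' z" by (rule F_Suc_left)
      obtain X where X: "F \<alpha> (R-1) m' z = X" by simp
      have d4: "complex_of_int c + (complex_of_nat l' - complex_of_nat m') - 1 + w \<noteq> 0" using d'' lS Suc by (simp add: algebra_simps)
      show ?thesis using a d'' lS Suc unfolding E p1 g unfolding lS Suc unfolding F0 f1 f2 e1 e2 X Y
        unfolding Re Se nn kk sw lS Suc
        apply simp
        apply (subst divtrick2)
        using d4 apply simp
        apply (subst divtrick3[OF a])
        apply algebra done
    qed
  qed
qed


theorem mainTheorem10:
  fixes \<alpha> s t u :: complex and n :: nat and c k :: int
  assumes "\<alpha> \<noteq> 0"
    and "(s + t) / 2 \<notin> \<int>"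
    and "n > 0"
    and "\<bar>k\<bar> \<le> int n" and "even (int n + k)"
  shows "(\<forall>z. - (1 / \<alpha>) *
            ((\<alpha> * (- u + of_int c + 1 + s) - z) * Dminus \<alpha> (psi \<alpha> s t n 0 (c + k + 1) (c + 1)) z
             - \<alpha> * u * Dplus \<alpha> (psi \<alpha> s t n 0 (c + k + 1) (c + 1)) z)
         = ((of_int n - of_int k) / 2) * (of_int c + 1 - (of_int n - of_int k) / 2 + (s + t) / 2 - u)
             / (of_int c + of_int k + 1 + (s + t) / 2) * psi \<alpha> s t n 0 (c + k + 2) c z
           + (u + (of_int n + of_int k) / 2) * (of_int c + 1 + (of_int n + of_int k) / 2 + (s + t) / 2)
             / (of_int c + of_int k + 1 + (s + t) / 2) * psi \<alpha> s t n 0 (c + k) c z)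
    \<and> (\<forall>z. - (1 / \<alpha>) *
            ((\<alpha> * (- u - of_int c + 1 - t) - z) * Dminus \<alpha> (psi \<alpha> s t n 0 (c + k - 1) (c - 1)) z
             - \<alpha> * u * Dplus \<alpha> (psi \<alpha> s t n 0 (c + k - 1) (c - 1)) z)
         = ((of_int n + of_int k) / 2) * (of_int c - 1 + (of_int n + of_int k) / 2 + (s + t) / 2 + u)
             / (of_int c + of_int k - 1 + (s + t) / 2) * psi \<alpha> s t n 0 (c + k - 2) c z
           + (u + (of_int n - of_int k) / 2) * (of_int c - 1 - (of_int n - of_int k) / 2 + (s + t) / 2)
             / (of_int c + of_int k - 1 + (s + t) / 2) * psi \<alpha> s t n 0 (c + k) c z)"
  proof -
  obtain j where j: "int n + k = 2 * j" using assms(5) by (metis evenE)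
  define l where "l = nat j"
  define m where "m = nat (j - k)"
  have hl: "int n + k = 2 * int l" using j assms(4) unfolding l_def by auto
  have hm: "int n - k = 2 * int m" using j assms(4) unfolding m_def by auto
  have d1: "of_int c + of_int k + 1 + (s + t) / 2 \<noteq> (0::complex)"
  proof
    assume h: "of_int c + of_int k + 1 + (s + t) / 2 = (0::complex)"
    hence "(s + t) / 2 = (of_int (- (c + k + 1)) :: complex)" by (simp add: algebra_simps eq_neg_iff_add_eq_0)
    thus False using assms(2) by (metis Ints_of_int)
  qed
  have d2: "of_int c + of_int k - 1 + (s + t) / 2 \<noteq> (0::complex)"
  proof
    assume h: "of_int c + of_int k - 1 + (s + t) / 2 = (0::complex)"
    hence "(s + t) / 2 = (of_int (1 - (c + k)) :: complex)" by (simp add: algebra_simps eq_neg_iff_add_eq_0)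
    thus False using assms(2) by (metis Ints_of_int)
  qed
  show ?thesis
    using id1[OF assms(1) d1 hm hl] id2[OF assms(1) d2 hm hl] by blast
qed

end
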